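(* Let $P$ be as in the context. If $x_a\ge x_\theta\ge0$ and $x_b\ge0$, then $$P(x_a,x_b,x_\theta)\ge\tfrac12\big(1-\Phi(x_a-x_\theta)\big)+\tfrac12\big(1-\Phi(x_a+x_\theta)\big).$$ If $0\le x_a<x_\theta$ and $x_b\ge0$, then $P(x_a,x_b,x_\theta)\ge\tfrac14$.
   Context: $\phi$ and $\Phi$ are the standard normal density and CDF. For $y,x_b\in\mathbb{R}$, $w(y,x_b)=\frac{e^{yx_b}}{e^{yx_b}+e^{-yx_b}}$, and $P(x_a,x_b,x_\theta)=\int_{\mathbb{R}}w(y-x_a,x_b)\,\tfrac12\big(\phi(y-x_\theta)+\phi(y+x_\theta)\big)dy$. *)

theory Defs
  imports "HOL-Probability.Probability"
begin

definition Phi :: "real \<Rightarrow> real" where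
  "Phi x = (LBINT t:{..x}. std_normal_density t)"

definition wfun :: "real \<Rightarrow> real \<Rightarrow> real" where
  "wfun y xb = exp (y * xb) / (exp (y * xb) + exp (- (y * xb)))"

definition Pfun :: "real \<Rightarrow> real \<Rightarrow> real \<Rightarrow> real" where
  "Pfun xa xb xth = (LBINT y. wfun (y - xa) xb *
      ((1/2) * (std_normal_density (y - xth) + std_normal_density (y + xth))))"

end

theory Submission
  imports Defs
begin

lemma w_pos: "0 < wfun z b" and w_le1: "wfun z b \<le> 1"
  unfolding wfun_def by (auto simp: divide_simps add_pos_pos)

lemma w_sym: "wfun (-z) b = 1 - wfun z b"
proof -
  have "exp (z*b) + exp (-(z*b)) > 0" by (simp add: add_pos_pos)
  then show ?thesis unfolding wfun_def by (simp add: field_simps)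
qed

lemma w_half: assumes "z \<ge> 0" "b \<ge> 0" shows "wfun z b \<ge> 1/2"
proof -
  have "z*b \<ge> 0" using assms by simp
  then have "exp (-(z*b)) \<le> exp (z*b)" by simp
  moreover have "exp (z*b) + exp (-(z*b)) > 0" by (simp add: add_pos_pos)
  ultimately show ?thesis unfolding wfun_def by (simp add: field_simps)
qed

lemma phi_mono: assumes "x^2 \<le> y^2" shows "std_normal_density y \<le> std_normal_density x"
  using assms unfolding std_normal_density_def by (auto intro!: divide_right_mono)

lemma w_meas[measurable]: "(\<lambda>z. wfun z b) \<in> borel_measurable borel"
  unfolding wfun_def by measurable

lemma phi_shift_integrable: "integrable lborel (\<lambda>z. std_normal_density (z + c))"
proof -
  have "integrable lborel (\<lambda>x. std_normal_density (c + 1 * x))"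
    by (rule lborel_integrable_real_affine) auto
  then show ?thesis by (simp add: add.commute)
qed

lemma phi_shift_integral: "(\<integral>z. std_normal_density (z + c) \<partial>lborel) = 1"
proof -
  have "(\<integral>x. std_normal_density x \<partial>lborel) = \<bar>1\<bar> *\<^sub>R (\<integral>x. std_normal_density (c + 1 * x) \<partial>lborel)"
    by (rule lborel_integral_real_affine) auto
  then show ?thesis by (simp add: add.commute)
qed

lemma wphi_integrable: "integrable lborel (\<lambda>z. wfun z b * std_normal_density (z + c))"
proof (rule Bochner_Integration.integrable_bound[OF phi_shift_integrable[of c]])
  show "(\<lambda>z. wfun z b * std_normal_density (z + c)) \<in> borel_measurable lborel" by measurable
  show "AE x in lborel. norm (wfun x b * std_normal_density (x + c)) \<le> norm (std_normal_density (x + c))"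
  proof (rule AE_I2)
    fix x
    have "\<bar>wfun x b\<bar> \<le> 1" using w_pos[of x b] w_le1[of x b] by simp
    then show "norm (wfun x b * std_normal_density (x + c)) \<le> norm (std_normal_density (x + c))"
      by (simp add: abs_mult mult_left_le_one_le)
  qed
qed

lemma reflect_integral: "(\<integral>z. f z \<partial>lborel) = (\<integral>z. f (- z) \<partial>lborel)" for f :: "real \<Rightarrow> real"
  using lborel_integral_real_affine[of "-1" f 0] by simp

lemma sqd: "(c - z)^2 = (z + c)^2 - 4 * (z * c)" for z c :: real
  by (simp add: power2_eq_square algebra_simps)

lemma sq_le1: "0 \<le> z*c \<Longrightarrow> (c - z)^2 \<le> (z + c)^2" for z c :: real
  using sqd[where z=z and c=c] by linarith

lemma sq_le2: "z*c \<le> 0 \<Longrightarrow> (z + c)^2 \<le> (c - z)^2" for z c :: real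
  using sqd[where z=z and c=c] by linarith

lemma reflect_integrable: "integrable lborel f \<Longrightarrow> integrable lborel (\<lambda>z. f (- z))" for f :: "real \<Rightarrow> real"
  using lborel_integrable_real_affine[of f "-1" 0] by simp

lemma sym_sum_integral: fixes f :: "real \<Rightarrow> real" assumes "integrable lborel f"
  shows "(\<integral>z. f z + f (- z) \<partial>lborel) = 2 * (\<integral>z. f z \<partial>lborel)"
  using Bochner_Integration.integral_add[OF assms reflect_integrable[OF assms]] reflect_integral[of f] by simp

lemma tail_integral: "Phi c + (\<integral>z. indicator {0<..} z * std_normal_density (z + c) \<partial>lborel) = 1"
proof -
  let ?f = "\<lambda>x. std_normal_density x * indicator {c<..} x :: real"
  have "(\<integral>x. ?f x \<partial>lborel) = \<bar>1\<bar> *\<^sub>R (\<integral>x. ?f (c + 1 * x) \<partial>lborel)"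
    by (rule lborel_integral_real_affine) auto
  also have "(\<lambda>x. ?f (c + 1 * x)) = (\<lambda>z. indicator {0<..} z * std_normal_density (z + c))"
    by (auto simp: indicator_def add.commute)
  finally have 1: "(\<integral>x. ?f x \<partial>lborel) = (\<integral>z. indicator {0<..} z * std_normal_density (z + c) \<partial>lborel)"
    by simp
  have 2: "Phi c = (\<integral>x. std_normal_density x * indicator {..c} x \<partial>lborel)"
    unfolding Phi_def set_lebesgue_integral_def by (simp add: mult.commute)
  have "(\<integral>x. std_normal_density x * indicator {..c} x \<partial>lborel) + (\<integral>x. ?f x \<partial>lborel)
      = (\<integral>x. std_normal_density x * indicator {..c} x + ?f x \<partial>lborel)"
    by (rule Bochner_Integration.integral_add[symmetric]) (auto intro!: integrable_real_mult_indicator)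
  also have "(\<lambda>x. std_normal_density x * indicator {..c} x + ?f x) = std_normal_density"
    by (auto simp: indicator_def)
  finally show ?thesis using 1 2 by simp
qed

lemma coreA: assumes "c \<ge> 0" "b \<ge> 0"
  shows "(\<integral>z. wfun z b * std_normal_density (z + c) \<partial>lborel) \<ge> 1 - Phi c"
proof -
  define g where "g = (\<lambda>z. wfun z b * std_normal_density (z + c))"
  define h where "h = (\<lambda>z. indicator {0<..} z * std_normal_density (z + c) :: real)"
  have gi: "integrable lborel g" unfolding g_def by (rule wphi_integrable)
  have hi: "integrable lborel h" unfolding h_def
    using integrable_real_mult_indicator[OF _ phi_shift_integrable[of c], of "{0<..}"]
    by (simp add: mult.commute)
  have pw: "h z + h (-z) \<le> g z + g (-z)" for z
  proof -
    let ?w = "wfun z b"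
    have w0: "0 \<le> ?w" "?w \<le> 1" using w_pos[of z b] w_le1[of z b] by auto
    have gm: "g (-z) = (1 - ?w) * std_normal_density (c - z)"
      unfolding g_def by (simp add: w_sym)
    consider "z > 0" | "z < 0" | "z = 0" by linarith
    then show ?thesis
    proof cases
      case 1
      have "std_normal_density (z + c) \<le> std_normal_density (c - z)"
        by (rule phi_mono, rule sq_le1, rule mult_nonneg_nonneg) (use 1 assms in auto)
      then have "0 \<le> (1 - ?w) * (std_normal_density (c - z) - std_normal_density (z + c))"
        using w0 by simp
      then show ?thesis using 1 gm unfolding h_def g_def by (simp add: algebra_simps)
    next
      case 2
      have "std_normal_density (c - z) \<le> std_normal_density (z + c)"
        by (rule phi_mono, rule sq_le2, rule mult_nonpos_nonneg) (use 2 assms in auto)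
      then have "0 \<le> ?w * (std_normal_density (z + c) - std_normal_density (c - z))"
        using w0 by simp
      then show ?thesis using 2 gm unfolding h_def g_def by (simp add: algebra_simps)
    next
      case 3
      then show ?thesis using gm w0 unfolding h_def g_def by simp
    qed
  qed
  have "(\<integral>z. h z + h (-z) \<partial>lborel) \<le> (\<integral>z. g z + g (-z) \<partial>lborel)"
    by (rule Bochner_Integration.integral_mono) (auto intro!: integrable_add reflect_integrable gi hi pw)
  then have "(\<integral>z. h z \<partial>lborel) \<le> (\<integral>z. g z \<partial>lborel)"
    using sym_sum_integral[OF gi] sym_sum_integral[OF hi] by simp
  moreover have "Phi c + (\<integral>z. h z \<partial>lborel) = 1" unfolding h_def by (rule tail_integral)
  ultimately show ?thesis unfolding g_def by simp
qed

lemma coreB: assumes "c \<le> 0" "b \<ge> 0"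
  shows "(\<integral>z. wfun z b * std_normal_density (z + c) \<partial>lborel) \<ge> 1/2"
proof -
  define g where "g = (\<lambda>z. wfun z b * std_normal_density (z + c))"
  define k where "k = (\<lambda>z. (1/2) * std_normal_density (z + c))"
  have gi: "integrable lborel g" unfolding g_def by (rule wphi_integrable)
  have ki: "integrable lborel k" unfolding k_def using phi_shift_integrable[of c] by simp
  have kint: "(\<integral>z. k z \<partial>lborel) = 1/2" unfolding k_def using phi_shift_integral[of c] by simp
  have pw: "k z + k (-z) \<le> g z + g (-z)" for z
  proof -
    let ?w = "wfun z b"
    have gm: "g (-z) = (1 - ?w) * std_normal_density (c - z)"
      unfolding g_def by (simp add: w_sym)
    have "0 \<le> (?w - 1/2) * (std_normal_density (z + c) - std_normal_density (c - z))"
    proof (cases "z \<ge> 0")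
      case True
      have "std_normal_density (c - z) \<le> std_normal_density (z + c)"
        by (rule phi_mono, rule sq_le2, rule mult_nonneg_nonpos) (use True assms in auto)
      moreover have "?w \<ge> 1/2" using w_half[OF True assms(2)] .
      ultimately show ?thesis by simp
    next
      case False
      have "std_normal_density (z + c) \<le> std_normal_density (c - z)"
        by (rule phi_mono, rule sq_le1, rule mult_nonpos_nonpos) (use False assms in auto)
      moreover have "?w \<le> 1/2" using w_half[of "-z" b] False assms(2) w_sym[of z b] by simp
      ultimately show ?thesis by (simp add: mult_nonpos_nonpos)
    qed
    then show ?thesis using gm unfolding k_def g_def by (simp add: algebra_simps)
  qed
  have "(\<integral>z. k z + k (-z) \<partial>lborel) \<le> (\<integral>z. g z + g (-z) \<partial>lborel)"
    by (rule Bochner_Integration.integral_mono) (auto intro!: integrable_add reflect_integrable gi ki pw)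
  then have "(\<integral>z. k z \<partial>lborel) \<le> (\<integral>z. g z \<partial>lborel)"
    using sym_sum_integral[OF gi] sym_sum_integral[OF ki] by simp
  then show ?thesis using kint unfolding g_def by simp
qed

lemma P_decomp: "Pfun xa b t = (1/2) * (\<integral>z. wfun z b * std_normal_density (z + (xa - t)) \<partial>lborel)
   + (1/2) * (\<integral>z. wfun z b * std_normal_density (z + (xa + t)) \<partial>lborel)"
proof -
  define F where "F = (\<lambda>y. wfun (y - xa) b *
      ((1/2) * (std_normal_density (y - t) + std_normal_density (y + t))))"
  have "(\<integral>y. F y \<partial>lborel) = \<bar>1\<bar> *\<^sub>R (\<integral>z. F (xa + 1 * z) \<partial>lborel)"
    by (rule lborel_integral_real_affine) auto
  also have "(\<lambda>z. F (xa + 1 * z)) = (\<lambda>z. (1/2) * (wfun z b * std_normal_density (z + (xa - t)))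
       + (1/2) * (wfun z b * std_normal_density (z + (xa + t))))"
    unfolding F_def by (auto simp: algebra_simps)
  also have "(\<integral>z. (1/2) * (wfun z b * std_normal_density (z + (xa - t)))
       + (1/2) * (wfun z b * std_normal_density (z + (xa + t))) \<partial>lborel)
     = (\<integral>z. (1/2) * (wfun z b * std_normal_density (z + (xa - t))) \<partial>lborel)
       + (\<integral>z. (1/2) * (wfun z b * std_normal_density (z + (xa + t))) \<partial>lborel)"
    by (rule Bochner_Integration.integral_add) (auto intro!: wphi_integrable)
  finally show ?thesis unfolding Pfun_def F_def by simp
qed

theorem lemma13:
  fixes xa xb xth :: real
  shows "(xa \<ge> xth \<and> xth \<ge> 0 \<and> xb \<ge> 0 \<longrightarrow>
           Pfun xa xb xth \<ge> (1/2) * (1 - Phi (xa - xth)) + (1/2) * (1 - Phi (xa + xth)))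
       \<and> (0 \<le> xa \<and> xa < xth \<and> xb \<ge> 0 \<longrightarrow> Pfun xa xb xth \<ge> 1/4)"
proof (intro conjI impI)
  assume a: "xa \<ge> xth \<and> xth \<ge> 0 \<and> xb \<ge> 0"
  have 1: "(\<integral>z. wfun z xb * std_normal_density (z + (xa - xth)) \<partial>lborel) \<ge> 1 - Phi (xa - xth)"
    by (rule coreA) (use a in auto)
  have 2: "(\<integral>z. wfun z xb * std_normal_density (z + (xa + xth)) \<partial>lborel) \<ge> 1 - Phi (xa + xth)"
    by (rule coreA) (use a in auto)
  show "Pfun xa xb xth \<ge> (1/2) * (1 - Phi (xa - xth)) + (1/2) * (1 - Phi (xa + xth))"
    unfolding P_decomp using add_mono[OF mult_left_mono[OF 1, of "1/2"] mult_left_mono[OF 2, of "1/2"]] by simp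
next
  assume a: "0 \<le> xa \<and> xa < xth \<and> xb \<ge> 0"
  have 1: "(\<integral>z. wfun z xb * std_normal_density (z + (xa - xth)) \<partial>lborel) \<ge> 1/2"
    by (rule coreB) (use a in auto)
  have 2: "(\<integral>z. wfun z xb * std_normal_density (z + (xa + xth)) \<partial>lborel) \<ge> 0"
    by (rule Bochner_Integration.integral_nonneg) (simp add: w_pos less_imp_le)
  show "Pfun xa xb xth \<ge> 1/4"
    unfolding P_decomp using 1 2 by linarith
qed

end
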